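(* Assume (A1)–(A9), and suppose that for every $1\le m\le M$ and every $\rho_0>0$, $$\lim_N\sum_{n=1}^{[\lambda_N^{-1}|G_N|^\epsilon]}\ \sup_{y_0\in\partial(C_{m,N}^c),\,y\in B(y_{m,N},\rho_0)}p^{G_N}_n(y_0,y)\frac1{\sqrt n}=0.$$ Then (A10) holds.
   Context: Weighted graphs: symmetric weights $w_{y,y'}\ge0$, positive exactly on edges; connected; $w_y=\sum_{y'}w_{y,y'}$; random walk with transition probabilities $w_{y,y'}/w_y$ and $n$-step probabilities $p_n$; $d$ graph distance, $B(y,r)$ closed ball; $\partial A$ = outer vertex boundary, $\bar A=A\cup\partial A$, $\partial(A^c)$ = vertices of $A$ with a neighbor outside $A$; isomorphisms = weight-preserving bijections between vertex subsets. Cylinders $\mathcal G\times\mathbb Z$: weights $w_{(y,z),(y',z')}=w_{y,y'}1_{\{z=z'\}}+\tfrac12 1_{\{y=y',|z-z'|=1\}}$. $P_x$: random walk on $G_N\times\mathbb Z$ from $x$; $H$ hitting times. $\lambda_N$: spectral gap of the continuous-time walk (rates $w_{y,y'}$) on $G_N$, i.e. $\min\{\mathcal D_N(f,f)/\mathrm{var}_\mu f\}$ with $\mu$ uniform and $\mathcal D_N(f,f)=\frac12\sum(f(y)-f(y'))^2w_{y,y'}/|G_N|$. $[\cdot]$ integer part. Hypotheses on finite connected weighted graphs $G_N$, $M\ge1$, points $x_{m,N}=(y_{m,N},z_{m,N})\in G_N\times\mathbb Z$, $\epsilon\in(0,1)$: (A1) $c_0\le w_y\le c_1$ on $G_N$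 for constants $0<c_0\le c_1$; (A2) $\lambda_N^{-1}\le|G_N|^{2-\epsilon}$; (A3) $\min_{m\ne m'}d(x_{m,N},x_{m',N})\to\infty$; (A4) $z_{m,N}/|G_N|\to v_m\in\mathbb R$; (A5) $r_N\to\infty$, infinite connected weighted graphs $\mathbb G_m$ with fixed $o_m$, isomorphisms $\phi_{m,N}:B(y_{m,N},r_N)\to B(o_m,r_N)\subset\mathbb G_m$, $\phi_{m,N}(y_{m,N})=o_m$; (A6) $B(y_{m,N},r_N)\subseteq C_{m,N}\subseteq G_N$; (A7) infinite connected weighted graphs $\hat{\mathbb G}_m$ and isomorphisms $\psi_{m,N}$ from $\bar C_{m,N}$ onto $\bar{\mathbb C}_{m,N}\subset\hat{\mathbb G}_m$ with $\mathbb C_{m,N}=\psi_{m,N}(C_{m,N})$, $\psi_{m,N}(\partial C_{m,N})=\partial\mathbb C_{m,N}$; (A8) if $v_m=v_{m'}$ then for each $N$, $C_{m,N}=C_{m',N}$ or $C_{m,N}\cap C_{m',N}=\emptyset$; (A9) with $\hat o_{m,N}=\psi_{m,N}(y_{m,N})$, for all $\rho_0>0$, $\lim_n n^{1/2+\epsilon}\sup_{N}\sup_{\mathtt y_0\in\hat{\mathbb G}_m}\sup_{\mathtt y\in B(\hat o_{m,N},\rho_0)}p^{\hat{\mathbb G}_m}_n(\mathtt y_0,\mathtt y)=0$; (A10) for all $(\mathtt y,z)\in\mathbb G_m\times\mathbb Z$, $\lim_N\sup_{y_0\in\partial(C_{m,N}^c),z_0\in\mathbb Z}P_{(y_0,z_0)}[H_{(\phi_{m,N}^{-1}(\mathtt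 y),z_{m,N}+z)}<\lambda_N^{-1}|G_N|^\epsilon]=0$. *)

theory Defs
  imports "HOL-Analysis.Analysis"
begin

text \<open>Weighted graphs are given by a vertex set V and a weight function w,
  with w x y = 0 unless x, y are both vertices.\<close>

definition edges :: "('a \<Rightarrow> 'a \<Rightarrow> real) \<Rightarrow> ('a \<times> 'a) set" where
  "edges w = {(x, y). w x y > 0}"

definition wdeg :: "'a set \<Rightarrow> ('a \<Rightarrow> 'a \<Rightarrow> real) \<Rightarrow> 'a \<Rightarrow> real" where
  "wdeg V w x = infsum (w x) V"

definition wgraph :: "'a set \<Rightarrow> ('a \<Rightarrow> 'a \<Rightarrow> real) \<Rightarrow> bool" where
  "wgraph V w \<longleftrightarrow> V \<noteq> {}
     \<and> (\<forall>x y. w x y = w y x) \<and> (\<forall>x y. 0 \<le> w x y)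
     \<and> (\<forall>x y. w x y \<noteq> 0 \<longrightarrow> x \<in> V \<and> y \<in> V)
     \<and> (\<forall>x\<in>V. w x summable_on V)
     \<and> (\<forall>x\<in>V. \<forall>y\<in>V. (x, y) \<in> (edges w)\<^sup>*)"

fun pstep :: "'a set \<Rightarrow> ('a \<Rightarrow> 'a \<Rightarrow> real) \<Rightarrow> nat \<Rightarrow> 'a \<Rightarrow> 'a \<Rightarrow> real" where
  "pstep V w 0 x y = (if x = y then 1 else 0)"
| "pstep V w (Suc n) x y = infsum (\<lambda>x'. w x x' / wdeg V w x * pstep V w n x' y) V"

definition gdist :: "('a \<Rightarrow> 'a \<Rightarrow> real) \<Rightarrow> 'a \<Rightarrow> 'a \<Rightarrow> nat" where
  "gdist w x y = (LEAST n. (x, y) \<in> (edges w) ^^ n)"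

definition gball :: "'a set \<Rightarrow> ('a \<Rightarrow> 'a \<Rightarrow> real) \<Rightarrow> 'a \<Rightarrow> real \<Rightarrow> 'a set" where
  "gball V w x r = {y \<in> V. real (gdist w x y) \<le> r}"

text \<open>Outer vertex boundary, closure, and inner boundary (the paper's boundary of A^c).\<close>
definition obd :: "'a set \<Rightarrow> ('a \<Rightarrow> 'a \<Rightarrow> real) \<Rightarrow> 'a set \<Rightarrow> 'a set" where
  "obd V w A = {y \<in> V - A. \<exists>x\<in>A. w x y > 0}"

definition gcl :: "'a set \<Rightarrow> ('a \<Rightarrow> 'a \<Rightarrow> real) \<Rightarrow> 'a set \<Rightarrow> 'a set" where
  "gcl V w A = A \<union> obd V w A"

definition ibd :: "'a set \<Rightarrow> ('a \<Rightarrow> 'a \<Rightarrow> real) \<Rightarrow> 'a set \<Rightarrow> 'a set" where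
  "ibd V w A = {x \<in> A. \<exists>y\<in>V - A. w x y > 0}"

definition wiso :: "('a \<Rightarrow> 'a \<Rightarrow> real) \<Rightarrow> ('b \<Rightarrow> 'b \<Rightarrow> real) \<Rightarrow> ('a \<Rightarrow> 'b) \<Rightarrow> 'a set \<Rightarrow> 'b set \<Rightarrow> bool" where
  "wiso w w' f A B \<longleftrightarrow> bij_betw f A B \<and> (\<forall>a\<in>A. \<forall>b\<in>A. w' (f a) (f b) = w a b)"

definition cyl_V :: "'a set \<Rightarrow> ('a \<times> int) set" where
  "cyl_V V = V \<times> UNIV"

definition cyl_w :: "'a set \<Rightarrow> ('a \<Rightarrow> 'a \<Rightarrow> real) \<Rightarrow> ('a \<times> int) \<Rightarrow> ('a \<times> int) \<Rightarrow> real" where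
  "cyl_w V w p q = (w (fst p) (fst q) * (if snd p = snd q then 1 else 0)
      + (if fst p = fst q \<and> fst p \<in> V \<and> \<bar>snd p - snd q\<bar> = 1 then 1/2 else 0))"

text \<open>hitp V w A k x = P_x[exists n < k with X_n in A] = P_x[H_A < k].\<close>
fun hitp :: "'a set \<Rightarrow> ('a \<Rightarrow> 'a \<Rightarrow> real) \<Rightarrow> 'a set \<Rightarrow> nat \<Rightarrow> 'a \<Rightarrow> real" where
  "hitp V w A 0 x = 0"
| "hitp V w A (Suc k) x =
     (if x \<in> A then 1 else infsum (\<lambda>x'. w x x' / wdeg V w x * hitp V w A k x') V)"

text \<open>P_x[H_A < t] for real t (H_A takes values in the naturals).\<close>
definition hit_before :: "'a set \<Rightarrow> ('a \<Rightarrow> 'a \<Rightarrow> real) \<Rightarrow> 'a set \<Rightarrow> real \<Rightarrow> 'a \<Rightarrow> real" where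
  "hit_before V w A t x = hitp V w A (nat \<lceil>t\<rceil>) x"

text \<open>Spectral gap of the continuous-time walk with rates w on a finite graph.\<close>
definition dirichlet :: "'a set \<Rightarrow> ('a \<Rightarrow> 'a \<Rightarrow> real) \<Rightarrow> ('a \<Rightarrow> real) \<Rightarrow> real" where
  "dirichlet V w f = (1/2) * (\<Sum>x\<in>V. \<Sum>y\<in>V. (f x - f y)^2 * w x y) / real (card V)"

definition uvar :: "'a set \<Rightarrow> ('a \<Rightarrow> real) \<Rightarrow> real" where
  "uvar V f = (\<Sum>x\<in>V. (f x - (\<Sum>y\<in>V. f y) / real (card V))^2) / real (card V)"

definition spectral_gap :: "'a set \<Rightarrow> ('a \<Rightarrow> 'a \<Rightarrow> real) \<Rightarrow> real" where
  "spectral_gap V w = Inf {dirichlet V w f / uvar V f | f. uvar V f \<noteq> 0}"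

definition supz :: "real set \<Rightarrow> real" where
  "supz S = (if S = {} then 0 else Sup S)"

end

theory Submission
  imports Defs
begin


fun sw :: "nat \<Rightarrow> int \<Rightarrow> real" where
  "sw 0 d = (if d = 0 then 1 else 0)"
| "sw (Suc j) d = (sw j (d - 1) + sw j (d + 1)) / 2"

definition swF :: "nat \<Rightarrow> int \<Rightarrow> real" where
  "swF j d = (if even (int j + d) \<and> - int j \<le> d then real (j choose nat ((int j + d) div 2)) / 2 ^ j else 0)"

lemma sw_eq: "sw j d = swF j d"
proof (induction j arbitrary: d)
  case 0
  then show ?case by (auto simp: swF_def)
next
  case (Suc j)
  have e: "sw (Suc j) d = (swF j (d - 1) + swF j (d + 1)) / 2" using Suc by simp
  show ?case
  proof (cases "even (int (Suc j) + d) \<and> - int (Suc j) \<le> d")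
    case False
    then show ?thesis unfolding e swF_def by auto
  next
    case True
    show ?thesis
    proof (cases "d = - int (Suc j)")
      case True
      then show ?thesis unfolding e swF_def by auto
    next
      case False
      have d0: "d \<noteq> - int j" using True by auto
      with True False have d1: "- int j \<le> d - 1" by linarith
      have par: "even (int j + d - 1)" using True by (auto simp: even_add)
      define k where "k = nat ((int j + (d - 1)) div 2)"
      obtain q where q: "int j + d - 1 = 2 * q" using par by (rule evenE)
      have q0: "0 \<le> q" using q d1 by linarith
      have kq: "k = nat q" unfolding k_def using q by (simp add: algebra_simps)
      have k1: "nat ((int (Suc j) + d) div 2) = Suc k"
      proof -
        have "int (Suc j) + d = 2 * (q + 1)" using q by simp
        then show ?thesis using q0 kq by (simp add: nat_add_distrib)
      qed
      have k2: "nat ((int j + (d + 1)) div 2) = Suc k"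
      proof -
        have "int j + (d + 1) = 2 * (q + 1)" using q by simp
        then show ?thesis using q0 kq by (simp add: nat_add_distrib)
      qed
      have par2: "even (int j + (d + 1))" using par by (auto simp: even_add)
      have par1: "even (int j + (d - 1))" using par by (auto simp: algebra_simps)
      have s1: "swF j (d - 1) = real (j choose k) / 2 ^ j"
        unfolding swF_def k_def using d1 par1 by simp
      have s2: "swF j (d + 1) = real (j choose Suc k) / 2 ^ j"
        unfolding swF_def k2[symmetric] using d1 par2 by simp
      have s3: "swF (Suc j) d = real (Suc j choose Suc k) / 2 ^ Suc j"
        unfolding swF_def k1[symmetric] using True by simp
      show ?thesis unfolding e s1 s2 s3 by (simp add: add_divide_distrib)
    qed
  qed
qed

lemma sw_nonneg: "0 \<le> sw j d"
  by (induction j arbitrary: d) auto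



lemma aux: "(0::real) < b \<Longrightarrow> (c * a / b)^2 * e = c^2 * a * (a * e / b^2)"
  by (simp add: power2_eq_square field_simps)

lemma central_bound: "(real ((2*m) choose m) / 4 ^ m)^2 * (2*m+1) \<le> 1"
proof (induction m)
  case 0
  then show ?case by simp
next
  case (Suc m)
  let ?c = "real ((2*m) choose m) / 4 ^ m"
  have b1: "real ((2*m+1) choose (m+1)) * (m+1) = (2*m+1) * real ((2*m) choose m)"
    using Suc_times_binomial[of m "2*m"] by (simp add: algebra_simps flip: of_nat_mult)
  have b2: "(2*m+1) choose (m+1) = (2*m+1) choose m"
    using central_binomial_odd[of "2*m+1"] by simp
  have b3: "(2*(Suc m)) choose (Suc m) = ((2*m+1) choose m) + ((2*m+1) choose (m+1))"
    by (simp add: b2)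
  have e1: "real ((2*Suc m) choose Suc m) = 2 * real ((2*m+1) choose m)"
    using b2 b3 by simp
  have pos: "(4::real)^m > 0" by simp
  have b1': "real (Suc m) * real (Suc (2*m) choose Suc m) = real (Suc (2*m)) * real ((2*m) choose m)"
    using Suc_times_binomial[of m "2*m"] by (metis of_nat_mult)
  have b2': "Suc (2*m) choose Suc m = Suc (2*m) choose m" using b2 by simp
  have e2: "real ((2*m+1) choose m) = (2*m+1) / (m+1) * real ((2*m) choose m)"
    using b1' unfolding b2' by (simp add: field_simps)
  have h: "real ((2*Suc m) choose Suc m) / 4 ^ Suc m = ?c * (2*m+1) / (2*m+2)"
    unfolding e1 e2 using pos by (simp add: divide_simps)
  have h2: "real (2*Suc m+1) = (2*m+3)" by simp
  have "(real ((2*Suc m) choose Suc m) / 4 ^ Suc m)^2 * (2*Suc m+1)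
     = (?c * (2*m+1) / (2*m+2))^2 * (2*m+3)"
    unfolding h h2[symmetric] by simp
  also have "\<dots> = ?c^2 * (2*m+1) * ((2*m+1)*(2*m+3) / (2*m+2)^2)"
    unfolding of_nat_mult of_nat_power by (rule aux) simp
  also have "\<dots> \<le> ?c^2 * (2*m+1) * 1"
  proof (intro mult_left_mono)
    have "(2*m+1)*(2*m+3) \<le> (2*m+2)^2" by (simp add: power2_eq_square algebra_simps)
    then have "real ((2*m+1)*(2*m+3)) \<le> real ((2*m+2)^2)" by (simp only: of_nat_le_iff)
    then show "real ((2*m+1)*(2*m+3)) / real ((2*m+2)^2) \<le> 1" by (simp add: divide_le_eq_1)
  qed simp
  also have "\<dots> \<le> 1" using Suc by simp
  finally show ?case .
qed

lemma odd_binom: "real ((2*m+1) choose m) / 2 ^ (2*m+1) = real ((2*(m+1)) choose (m+1)) / 4 ^ (m+1)"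
proof -
  have b2: "(2*m+1) choose (m+1) = (2*m+1) choose m"
    using central_binomial_odd[of "2*m+1"] by simp
  have b3: "(2*(Suc m)) choose (Suc m) = ((2*m+1) choose m) + ((2*m+1) choose (m+1))"
    by (simp add: b2)
  have p: "(2::real)^(2*m+1) = 2 * 4^m" by (simp add: power_mult)
  have e1: "real ((2*Suc m) choose Suc m) = 2 * real ((2*m+1) choose m)"
    using b2 b3 by simp
  show ?thesis unfolding p by (simp only: Suc_eq_plus1[symmetric] e1) (simp add: field_simps)
qed

lemma sq_le_sqrt:
  assumes "0 \<le> (c::real)" "c^2 * x \<le> 1" "0 < x"
  shows "c \<le> 1 / sqrt x"
proof -
  have "sqrt (c^2 * x) \<le> 1" using assms(2) by (simp add: real_sqrt_le_1_iff)
  moreover have "sqrt (c^2 * x) = c * sqrt x" using assms(1) by (simp add: real_sqrt_mult)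
  ultimately have "c * sqrt x \<le> 1" by simp
  then show ?thesis using assms(3) by (simp add: le_divide_eq)
qed

lemma binom_half_bound: "real (j choose (j div 2)) / 2 ^ j \<le> 1 / sqrt (real j + 1)"
proof (cases "even j")
  case True
  then obtain m where j: "j = 2*m" by (auto elim: evenE)
  have "real ((2*m) choose m) / 4 ^ m \<le> 1 / sqrt (2*m+1)"
    by (rule sq_le_sqrt) (use central_bound[of m] in auto)
  then show ?thesis using j by (simp add: power_mult add.commute)
next
  case False
  then obtain m where j: "j = 2*m+1" by (auto elim: oddE)
  have "real ((2*(m+1)) choose (m+1)) / 4 ^ (m+1) \<le> 1 / sqrt (2*(m+1)+1)"
    by (rule sq_le_sqrt) (use central_bound[of "m+1"] in auto)
  also have "\<dots> \<le> 1 / sqrt (real j + 1)" using j by (simp add: divide_simps)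
  finally show ?thesis using j odd_binom[of m] by simp
qed

lemma sw_bound: "sw j d \<le> 1 / sqrt (real j + 1)"
proof -
  have "sw j d \<le> real (j choose (j div 2)) / 2 ^ j"
    unfolding sw_eq swF_def
    by (auto intro!: divide_right_mono binomial_maximum)
  also have "\<dots> \<le> 1 / sqrt (real j + 1)" by (rule binom_half_bound)
  finally show ?thesis .
qed



locale fg =
  fixes V :: "'a set" and w :: "'a \<Rightarrow> 'a \<Rightarrow> real" and c0 c1 :: real
  assumes fin: "finite V" and wg: "wgraph V w" and c0: "0 < c0" and c01: "c0 \<le> c1"
    and deg: "\<And>x. x \<in> V \<Longrightarrow> c0 \<le> wdeg V w x \<and> wdeg V w x \<le> c1"
begin

lemma w_nn: "0 \<le> w x y" using wg unfolding wgraph_def by auto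
lemma w_supp: "w x y \<noteq> 0 \<Longrightarrow> x \<in> V \<and> y \<in> V" using wg unfolding wgraph_def by auto
lemma w_sym: "w x y = w y x" using wg unfolding wgraph_def by auto

lemma wdeg_sum: "wdeg V w x = (\<Sum>y\<in>V. w x y)"
  unfolding wdeg_def using fin by simp

lemma deg_nn: "0 \<le> wdeg V w x"
  unfolding wdeg_sum by (intro sum_nonneg w_nn)

lemma pstep_Suc': "pstep V w (Suc n) x y = (\<Sum>x'\<in>V. w x x' / wdeg V w x * pstep V w n x' y)"
  using fin by simp

lemma pstep_nn: "0 \<le> pstep V w n x y"
  by (induction n arbitrary: x) (simp_all only: pstep_Suc', auto intro!: sum_nonneg mult_nonneg_nonneg divide_nonneg_nonneg w_nn deg_nn)

lemma cyl_sum: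
  assumes u: "u \<in> V"
  shows "infsum (\<lambda>x'. cyl_w V w (u, z0) x' * F x') (cyl_V V)
       = (\<Sum>u'\<in>V. w u u' * F (u', z0)) + (F (u, z0 + 1) + F (u, z0 - 1)) / 2"
proof -
  let ?S = "V \<times> {z0 - 1, z0, z0 + 1}"
  let ?f = "\<lambda>x'. cyl_w V w (u, z0) x' * F x'"
  have "infsum ?f (cyl_V V) = infsum ?f ?S"
    by (rule infsum_cong_neutral) (auto simp: cyl_V_def cyl_w_def)
  also have "\<dots> = sum ?f ?S" using fin by simp
  also have "\<dots> = (\<Sum>a\<in>V. \<Sum>b\<in>{z0 - 1, z0, z0 + 1}. ?f (a, b))"
    by (rule sum.cartesian_product')
  also have "\<dots> = (\<Sum>a\<in>V. w u a * F (a, z0) + ((if a = u then F (u, z0 - 1) / 2 else 0)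
        + (if a = u then F (u, z0 + 1) / 2 else 0)))"
    by (intro sum.cong refl) (auto simp: cyl_w_def u)
  also have "\<dots> = (\<Sum>u'\<in>V. w u u' * F (u', z0)) + (F (u, z0 + 1) + F (u, z0 - 1)) / 2"
    using u fin by (simp add: sum.distrib sum.delta' field_simps)
  finally show ?thesis .
qed

lemma cyl_deg: "u \<in> V \<Longrightarrow> wdeg (cyl_V V) (cyl_w V w) (u, z0) = wdeg V w u + 1"
  using cyl_sum[of u z0 "\<lambda>_. 1"] unfolding wdeg_def by (simp add: fin)

lemma cyl_step:
  assumes u: "u \<in> V"
  shows "infsum (\<lambda>x'. cyl_w V w (u, z0) x' / wdeg (cyl_V V) (cyl_w V w) (u, z0) * F x') (cyl_V V)
       = (\<Sum>u'\<in>V. w u u' / (wdeg V w u + 1) * F (u', z0))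
         + (F (u, z0 + 1) + F (u, z0 - 1)) / (2 * (wdeg V w u + 1))"
proof -
  have "(\<lambda>x'. cyl_w V w (u, z0) x' / wdeg (cyl_V V) (cyl_w V w) (u, z0) * F x')
      = (\<lambda>x'. cyl_w V w (u, z0) x' * (F x' / (wdeg V w u + 1)))"
    using cyl_deg[OF u] by auto
  then show ?thesis using cyl_sum[OF u, of z0 "\<lambda>x'. F x' / (wdeg V w u + 1)"]
    by (simp add: sum_divide_distrib add_divide_distrib mult.commute)
qed

end

fun Qf :: "'a set \<Rightarrow> ('a \<Rightarrow> 'a \<Rightarrow> real) \<Rightarrow> 'a \<Rightarrow> nat \<Rightarrow> nat \<Rightarrow> 'a \<Rightarrow> real" where
  "Qf V w y 0 0 u = (if u = y then 1 else 0)"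
| "Qf V w y 0 (Suc j) u = Qf V w y 0 j u / (wdeg V w u + 1)"
| "Qf V w y (Suc k) 0 u = (\<Sum>u'\<in>V. w u u' / (wdeg V w u + 1) * Qf V w y k 0 u')"
| "Qf V w y (Suc k) (Suc j) u = (\<Sum>u'\<in>V. w u u' / (wdeg V w u + 1) * Qf V w y k (Suc j) u')
      + Qf V w y (Suc k) j u / (wdeg V w u + 1)"

definition Wt where
  "Wt V w y zt n u z0 = (\<Sum>j\<le>n. Qf V w y (n - j) j u * sw j (zt - z0))"

lemma Qf_rec:
  assumes "j \<le> Suc n"
  shows "Qf V w y (Suc n - j) j u =
    (if j \<le> n then (\<Sum>u'\<in>V. w u u' / (wdeg V w u + 1) * Qf V w y (n - j) j u') else 0)
    + (if 1 \<le> j then Qf V w y (Suc n - j) (j - 1) u / (wdeg V w u + 1) else 0)"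
proof (cases j)
  case 0
  then show ?thesis by simp
next
  case (Suc j')
  show ?thesis
  proof (cases "j' = n")
    case True
    then show ?thesis using Suc by simp
  next
    case False
    have "n - j' \<noteq> 0" using assms Suc False by simp
    then obtain k where k: "n - j' = Suc k" using not0_implies_Suc by blast
    then have "Suc n - j = Suc k" "n - j = k" using Suc assms by auto
    then show ?thesis using Suc False assms by simp
  qed
qed

context fg begin

lemma Qf_nn: "0 \<le> Qf V w y k j u"
proof (induction k arbitrary: j u)
  case 0
  show ?case by (induction j arbitrary: u) (auto intro!: divide_nonneg_nonneg add_nonneg_nonneg deg_nn)
next
  case (Suc k)
  show ?case
    by (induction j arbitrary: u)
       (auto intro!: add_nonneg_nonneg sum_nonneg mult_nonneg_nonneg divide_nonneg_nonneg w_nn deg_nn Suc.IH)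
qed

lemma Wt_nn: "0 \<le> Wt V w y zt n u z0"
  unfolding Wt_def by (intro sum_nonneg mult_nonneg_nonneg Qf_nn sw_nonneg)

lemma Wt_step:
  "(\<Sum>u'\<in>V. w u u' / (wdeg V w u + 1) * Wt V w y zt n u' z0)
     + (Wt V w y zt n u (z0 + 1) + Wt V w y zt n u (z0 - 1)) / (2 * (wdeg V w u + 1))
   = Wt V w y zt (Suc n) u z0"
proof -
  let ?D = "wdeg V w u + 1"
  let ?G = "\<lambda>j. (\<Sum>u'\<in>V. w u u' / ?D * Qf V w y (n - j) j u')"
  let ?s = "\<lambda>j. sw j (zt - z0)"
  have "Wt V w y zt (Suc n) u z0 = (\<Sum>j\<le>Suc n.
      (if j \<le> n then ?G j else 0) * ?s j
      + (if 1 \<le> j then Qf V w y (Suc n - j) (j - 1) u / ?D else 0) * ?s j)"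
    unfolding Wt_def by (intro sum.cong refl) (subst Qf_rec, auto simp: algebra_simps)
  also have "\<dots> = (\<Sum>j\<le>Suc n. (if j \<le> n then ?G j else 0) * ?s j)
      + (\<Sum>j\<le>Suc n. (if 1 \<le> j then Qf V w y (Suc n - j) (j - 1) u / ?D else 0) * ?s j)"
    by (rule sum.distrib)
  also have "(\<Sum>j\<le>Suc n. (if j \<le> n then ?G j else 0) * ?s j) = (\<Sum>j\<le>n. ?G j * ?s j)"
    by (simp add: sum.atMost_Suc)
  also have "(\<Sum>j\<le>Suc n. (if 1 \<le> j then Qf V w y (Suc n - j) (j - 1) u / ?D else 0) * ?s j)
      = (\<Sum>j\<le>n. Qf V w y (n - j) j u / ?D * ?s (Suc j))"
    by (subst sum.atMost_Suc_shift) simp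
  also have "(\<Sum>j\<le>n. ?G j * ?s j) = (\<Sum>u'\<in>V. w u u' / ?D * Wt V w y zt n u' z0)"
    unfolding Wt_def sum_distrib_left sum_distrib_right
    by (subst sum.swap) (simp add: algebra_simps)
  also have "(\<Sum>j\<le>n. Qf V w y (n - j) j u / ?D * ?s (Suc j))
      = (Wt V w y zt n u (z0 + 1) + Wt V w y zt n u (z0 - 1)) / (2 * ?D)"
    unfolding Wt_def by (simp add: sum_divide_distrib sum.distrib[symmetric] algebra_simps add_divide_distrib)
  finally show ?thesis by simp
qed

lemma hit_bound:
  assumes "u \<in> V"
  shows "hitp (cyl_V V) (cyl_w V w) {(y, zt)} k (u, z0) \<le> (\<Sum>n<k. Wt V w y zt n u z0)"
  using assms
proof (induction k arbitrary: u z0)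
  case 0
  then show ?case by simp
next
  case (Suc k)
  show ?case
  proof (cases "(u, z0) = (y, zt)")
    case True
    have "Wt V w y zt 0 u z0 = 1" using True by (simp add: Wt_def)
    moreover have "(\<Sum>n<Suc k. Wt V w y zt n u z0) = Wt V w y zt 0 u z0 + (\<Sum>n<k. Wt V w y zt (Suc n) u z0)"
      by (rule sum.lessThan_Suc_shift)
    moreover have "0 \<le> (\<Sum>n<k. Wt V w y zt (Suc n) u z0)" by (intro sum_nonneg Wt_nn)
    ultimately show ?thesis using True by simp
  next
    case False
    let ?D = "wdeg V w u + 1"
    let ?h = "hitp (cyl_V V) (cyl_w V w) {(y, zt)} k"
    let ?B = "\<lambda>u z0. (\<Sum>n<k. Wt V w y zt n u z0)"
    have "hitp (cyl_V V) (cyl_w V w) {(y, zt)} (Suc k) (u, z0)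
      = (\<Sum>u'\<in>V. w u u' / ?D * ?h (u', z0)) + (?h (u, z0 + 1) + ?h (u, z0 - 1)) / (2 * ?D)"
      using False cyl_step[OF Suc.prems, of z0 ?h] by (auto simp del: hitp.simps simp: hitp.simps(2))
    also have "\<dots> \<le> (\<Sum>u'\<in>V. w u u' / ?D * ?B u' z0) + (?B u (z0 + 1) + ?B u (z0 - 1)) / (2 * ?D)"
      using Suc.IH Suc.prems
      by (intro add_mono sum_mono mult_left_mono divide_right_mono)
         (auto intro!: divide_nonneg_nonneg w_nn add_nonneg_nonneg deg_nn)
    also have "\<dots> = (\<Sum>n<k. Wt V w y zt (Suc n) u z0)"
      by (simp add: Wt_step[symmetric] sum_distrib_left sum.distrib sum_divide_distrib add_divide_distrib
          flip: sum.swap[of _ V] ) 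
    also have "\<dots> \<le> (\<Sum>n<Suc k. Wt V w y zt n u z0)"
      by (subst sum.lessThan_Suc_shift) (simp add: Wt_nn)
    finally show ?thesis .
  qed
qed

end


lemma geo_bound:
  fixes S :: "nat \<Rightarrow> real"
  assumes "S 0 = 0" "\<And>J. S (Suc J) \<le> X + r * S J" "0 \<le> X" "0 \<le> r" "r < 1"
  shows "S J \<le> X / (1 - r)"
proof (induction J)
  case 0 then show ?case using assms by simp
next
  case (Suc J)
  have "S (Suc J) \<le> X + r * (X / (1 - r))"
    using assms(2)[of J] mult_left_mono[OF Suc assms(4)] by linarith
  also have "\<dots> = X / (1 - r)" using assms(5) by (simp add: field_simps)
  finally show ?case .
qed

lemma aux2: "(D::real) > 0 \<Longrightarrow> D - t > 0 \<Longrightarrow> (A * (d / D) * p) / (1 - t / D) = A * p * (d / (D - t))"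
  by (simp add: field_simps)

context fg begin

lemma Qf0_zero: "u \<noteq> y \<Longrightarrow> Qf V w y 0 j u = 0"
  by (induction j) auto

lemma S_bound:
  assumes t: "0 < t" "t \<le> 1" and u: "u \<in> V"
  shows "(\<Sum>j<J. Qf V w y k j u * t ^ j) \<le> (c1 / (c1 + 1 - t)) ^ k * ((c0 + 1) / c0) * pstep V w k u y"
  using u
proof (induction k arbitrary: u J)
  case 0
  let ?D = "wdeg V w u + 1"
  let ?X = "if u = y then 1 else (0::real)"
  have dg: "c0 \<le> wdeg V w u" "wdeg V w u \<le> c1" using deg[OF 0] by auto
  have Dpos: "?D - t > 0" using dg c0 t by linarith
  have "(\<Sum>j<J. Qf V w y 0 j u * t ^ j) \<le> ?X / (1 - t / ?D)"
  proof (rule geo_bound[where S = "\<lambda>J. \<Sum>j<J. Qf V w y 0 j u * t ^ j"])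
    fix J
    show "(\<Sum>j<Suc J. Qf V w y 0 j u * t ^ j) \<le> ?X + t / ?D * (\<Sum>j<J. Qf V w y 0 j u * t ^ j)" (is ?thesis)
    proof -
      have nz: "1 + wdeg V w u \<noteq> 0" using deg_nn[of u] by linarith
      have e: "\<And>j. Qf V w y 0 (Suc j) u * t ^ (Suc j) = t / ?D * (Qf V w y 0 j u * t ^ j)"
        by (simp add: field_simps)
      show ?thesis by (subst sum.lessThan_Suc_shift) (simp only: e sum_distrib_left[symmetric], simp)
    qed
  qed (use dg c0 t Dpos deg_nn[of u] in \<open>auto simp: divide_simps\<close>)
  also have "\<dots> \<le> ((c0 + 1) / c0) * ?X"
  proof (cases "u = y")
    case True
    have Dp: "?D > 0" using dg c0 by linarith
    have "1 / (1 - t / ?D) = ?D / (?D - t)" using Dpos Dp by (simp add: divide_simps)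
    also have "\<dots> \<le> (c0 + 1) / c0"
    proof -
      have ct: "c0 * t \<le> c0" using c0 t by (simp add: mult_left_le)
      show ?thesis using Dpos dg c0 t by (simp add: divide_simps algebra_simps) (use ct dg in linarith)
    qed
    finally show ?thesis using True by simp
  qed simp
  finally show ?case by simp
next
  case (Suc k)
  let ?D = "wdeg V w u + 1"
  let ?rho = "c1 / (c1 + 1 - t)"
  let ?K = "(c0 + 1) / c0"
  let ?X = "(\<Sum>u'\<in>V. w u u' / ?D * (?rho ^ k * ?K * pstep V w k u' y))"
  have dg: "c0 \<le> wdeg V w u" "wdeg V w u \<le> c1" using deg[OF Suc.prems] by auto
  have Dpos: "?D - t > 0" using dg c0 t by linarith
  have Xnn: "0 \<le> ?X"
    using c0 c01 t dg by (intro sum_nonneg mult_nonneg_nonneg divide_nonneg_nonneg w_nn pstep_nn zero_le_power) auto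
  have "(\<Sum>j<J. Qf V w y (Suc k) j u * t ^ j) \<le> ?X / (1 - t / ?D)"
  proof (rule geo_bound[where S = "\<lambda>J. \<Sum>j<J. Qf V w y (Suc k) j u * t ^ j"])
    fix J
    have "(\<Sum>j<Suc J. Qf V w y (Suc k) j u * t ^ j)
       = (\<Sum>j<Suc J. (\<Sum>u'\<in>V. w u u' / ?D * Qf V w y k j u') * t ^ j)
         + t / ?D * (\<Sum>j<J. Qf V w y (Suc k) j u * t ^ j)"
      apply (subst (1 2) sum.lessThan_Suc_shift)
      apply (simp add: sum_distrib_left sum_distrib_right sum.distrib field_simps)
      done
    also have "(\<Sum>j<Suc J. (\<Sum>u'\<in>V. w u u' / ?D * Qf V w y k j u') * t ^ j)
        = (\<Sum>u'\<in>V. w u u' / ?D * (\<Sum>j<Suc J. Qf V w y k j u' * t ^ j))"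
    proof -
      have "(\<Sum>j<Suc J. (\<Sum>u'\<in>V. w u u' / ?D * Qf V w y k j u') * t ^ j)
          = (\<Sum>j<Suc J. \<Sum>u'\<in>V. w u u' / ?D * (Qf V w y k j u' * t ^ j))"
        by (simp add: sum_distrib_right mult.assoc)
      also have "\<dots> = (\<Sum>u'\<in>V. \<Sum>j<Suc J. w u u' / ?D * (Qf V w y k j u' * t ^ j))"
        by (rule sum.swap)
      also have "\<dots> = (\<Sum>u'\<in>V. w u u' / ?D * (\<Sum>j<Suc J. Qf V w y k j u' * t ^ j))"
        by (simp only: sum_distrib_left)
      finally show ?thesis .
    qed
    also have "\<dots> \<le> ?X"
      by (intro sum_mono mult_left_mono Suc.IH) (auto intro!: divide_nonneg_nonneg w_nn add_nonneg_nonneg deg_nn)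
    finally show "(\<Sum>j<Suc J. Qf V w y (Suc k) j u * t ^ j) \<le> ?X + t / ?D * (\<Sum>j<J. Qf V w y (Suc k) j u * t ^ j)"
      by simp
  qed (use dg c0 t Dpos Xnn deg_nn[of u] in \<open>auto simp: divide_simps\<close>)
  also have "?X = ?rho ^ k * ?K * (wdeg V w u / ?D) * pstep V w (Suc k) u y"
  proof -
    let ?c = "?rho ^ k * ?K / ?D"
    let ?s = "(\<Sum>u'\<in>V. w u u' * pstep V w k u' y)"
    have "?X = (\<Sum>u'\<in>V. ?c * (w u u' * pstep V w k u' y))"
      by (intro sum.cong refl) (simp add: field_simps)
    also have "\<dots> = ?c * ?s" by (simp only: sum_distrib_left)
    finally have 1: "?X = ?c * ?s" .
    have 2: "pstep V w (Suc k) u y = ?s / wdeg V w u"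
      unfolding pstep_Suc' sum_divide_distrib by (intro sum.cong refl) (simp add: field_simps)
    have dgp: "wdeg V w u > 0" using dg c0 by linarith
    have Dne: "wdeg V w u + 1 \<noteq> 0" using dgp by linarith
    have eq: "wdeg V w u / ?D * (?s / wdeg V w u) = ?s / ?D" using dgp by simp
    have "?rho ^ k * ?K * (wdeg V w u / ?D) * (?s / wdeg V w u)
        = ?rho ^ k * ?K * (wdeg V w u / ?D * (?s / wdeg V w u))" by (simp only: mult.assoc)
    also have "\<dots> = ?rho ^ k * ?K * (?s / ?D)" by (simp only: eq)
    also have "\<dots> = ?c * ?s" by simp
    finally show ?thesis unfolding 1 2 by simp
  qed
  also have "\<dots> / (1 - t / ?D) = ?rho ^ k * ?K * pstep V w (Suc k) u y * (wdeg V w u / (?D - t))"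
    by (rule aux2) (use Dpos dg c0 in auto)
  also have "\<dots> \<le> ?rho ^ k * ?K * pstep V w (Suc k) u y * ?rho"
  proof (rule mult_left_mono)
    show "wdeg V w u / (?D - t) \<le> ?rho"
    proof -
      have f1: "0 \<le> (c1 - wdeg V w u) * (1 - t)" using dg t by (intro mult_nonneg_nonneg) auto
      have f2: "(c1 - wdeg V w u) * (1 - t) = c1 + t * wdeg V w u - (c1 * t + wdeg V w u)"
        by (simp add: algebra_simps)
      have f3: "wdeg V w u * (c1 + 1 - t) = wdeg V w u * c1 + wdeg V w u - t * wdeg V w u"
        "c1 * (wdeg V w u + 1 - t) = wdeg V w u * c1 + c1 - c1 * t" by (simp_all add: algebra_simps)
      have eq: "c1 * (wdeg V w u + 1 - t) - wdeg V w u * (c1 + 1 - t) = (c1 - wdeg V w u) * (1 - t)"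
        by (simp add: algebra_simps)
      have "0 \<le> c1 * (wdeg V w u + 1 - t) - wdeg V w u * (c1 + 1 - t)" unfolding eq by (rule f1)
      then have key: "wdeg V w u * (c1 + 1 - t) \<le> c1 * (wdeg V w u + 1 - t)" by simp
      show ?thesis using Dpos dg c0 c01 t by (simp add: divide_simps) (rule key)
    qed
    show "0 \<le> ?rho ^ k * ?K * pstep V w (Suc k) u y"
      using c0 c01 t by (intro mult_nonneg_nonneg pstep_nn zero_le_power divide_nonneg_nonneg) auto
  qed
  finally show ?case by (simp add: mult_ac)
qed

end


lemma consts_exist:
  assumes c1: "0 < (c1::real)"
  shows "\<exists>\<gamma> B C1. 0 < \<gamma> \<and> \<gamma>^2 = c1 / (c1 + 1/2) \<and> 0 \<le> B \<and>
     (\<forall>k::nat. 1 \<le> k \<longrightarrow> (\<forall>j::nat. 1 / sqrt (real j + 1) \<le> (1/2)^j / \<gamma>^k + B / sqrt (real k))) \<and>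
     (\<forall>k::nat. 1 \<le> k \<longrightarrow> \<gamma>^k \<le> C1 / sqrt (real k))"
proof -
  define \<rho> where "\<rho> = c1 / (c1 + 1/2)"
  have r0: "0 < \<rho>" "\<rho> < 1" using c1 unfolding \<rho>_def by (auto simp: divide_simps)
  define \<gamma> where "\<gamma> = sqrt \<rho>"
  have g0: "0 < \<gamma>" "\<gamma> < 1" using r0 unfolding \<gamma>_def by auto
  have g2: "\<gamma>^2 = \<rho>" using r0 unfolding \<gamma>_def by simp
  define \<delta> where "\<delta> = ln \<gamma> / ln (1/2)"
  have lg: "ln \<gamma> < 0" using g0 by simp
  have lh: "ln (1/2::real) < 0" by simp
  have d0: "0 < \<delta>" unfolding \<delta>_def using lg lh by (simp add: divide_neg_neg)
  have dl: "\<delta> * ln (1/2) = ln \<gamma>" unfolding \<delta>_def using lh by simp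
  define B where "B = 1 / sqrt \<delta>"
  have B0: "0 \<le> B" unfolding B_def using d0 by simp
  define h where "h = 1 / \<gamma> - 1"
  have h0: "0 < h" unfolding h_def using g0 by (simp add: field_simps)
  define C1 where "C1 = 1 / h"
  have fb: "1 / sqrt (real j + 1) \<le> (1/2)^j / \<gamma>^k + B / sqrt (real k)" if k: "1 \<le> k" for k j :: nat
  proof (cases "real j \<le> \<delta> * real k")
    case True
    have "real j * ln (1/2) \<ge> \<delta> * real k * ln (1/2)"
      using True lh by (simp add: mult_right_mono_neg)
    moreover have "real k * ln \<gamma> = \<delta> * real k * ln (1/2)" by (simp add: dl[symmetric] algebra_simps)
    moreover have "ln ((1/2::real)^j) = real j * ln (1/2)" by (simp add: ln_realpow)
    moreover have "ln (\<gamma>^k) = real k * ln \<gamma>" using g0 by (simp add: ln_realpow)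
    ultimately have "ln ((1/2::real)^j) \<ge> ln (\<gamma>^k)" by linarith
    then have "(1/2::real)^j \<ge> \<gamma>^k" using g0 by simp
    then have "1 \<le> (1/2)^j / \<gamma>^k" using g0 by simp
    moreover have "1 / sqrt (real j + 1) \<le> 1" by simp
    moreover have "0 \<le> B / sqrt (real k)" using B0 by simp
    ultimately show ?thesis by linarith
  next
    case False
    have kp: "0 < real k" using k by simp
    have "sqrt (\<delta> * real k) \<le> sqrt (real j + 1)" using False by simp
    moreover have "0 < sqrt (\<delta> * real k)" using d0 kp by simp
    ultimately have "1 / sqrt (real j + 1) \<le> 1 / sqrt (\<delta> * real k)"
      by (simp add: frac_le)
    also have "\<dots> = B / sqrt (real k)" unfolding B_def by (simp add: real_sqrt_mult)
    also have "\<dots> \<le> (1/2)^j / \<gamma>^k + B / sqrt (real k)" using g0 by simp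
    finally show ?thesis .
  qed
  have gb: "\<gamma>^k \<le> C1 / sqrt (real k)" if k: "1 \<le> k" for k :: nat
  proof -
    have kp: "0 < real k" using k by simp
    have "1 + real k * h \<le> (1 + h)^k" using Bernoulli_inequality[of h k] h0 by simp
    also have "1 + h = 1 / \<gamma>" unfolding h_def by simp
    finally have b: "1 + real k * h \<le> (1 / \<gamma>)^k" .
    have "\<gamma>^k = 1 / (1 / \<gamma>)^k" using g0 by (simp add: power_one_over)
    also have "\<dots> \<le> 1 / (real k * h)"
      using b h0 kp g0 by (intro divide_left_mono) auto
    also have "\<dots> = C1 / real k" unfolding C1_def by simp
    also have "\<dots> \<le> C1 / sqrt (real k)"
    proof (rule divide_left_mono)
      have "real k * 1 \<le> real k * real k" using k by (intro mult_left_mono) auto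
      then have "sqrt (real k) \<le> sqrt (real k * real k)" by (intro real_sqrt_le_mono) simp
      then show "sqrt (real k) \<le> real k" by simp
    qed (use h0 kp in \<open>auto simp: C1_def\<close>)
    finally show ?thesis .
  qed
  have g2': "\<gamma>^2 = c1 / (c1 + 1/2)" using g2 unfolding \<rho>_def .
  show ?thesis
    apply (rule exI[of _ \<gamma>], rule exI[of _ B], rule exI[of _ C1])
    using g0(1) g2' B0 fb gb by blast
qed



lemma aux3: "(G::real) \<noteq> 0 \<Longrightarrow> (1/G) * (G^2 * K * p) + b * (1 * K * p) = K * p * (G + b)"
  by (simp add: power2_eq_square field_simps)

context fg begin

lemma per_m:
  assumes u: "u \<in> V" "u \<noteq> y"
    and g: "0 < \<gamma>" "\<gamma>^2 = c1 / (c1 + 1/2)" "0 \<le> B"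
    and fb: "\<And>k j. 1 \<le> k \<Longrightarrow> 1 / sqrt (real j + 1) \<le> (1/2)^j / \<gamma>^k + B / sqrt (real k)"
    and gb: "\<And>k. 1 \<le> k \<Longrightarrow> \<gamma>^k \<le> C1 / sqrt (real k)"
  shows "(\<Sum>j<K. Qf V w y m j u * (1 / sqrt (real j + 1)))
     \<le> (c0 + 1) / c0 * (C1 + B) * (pstep V w m u y / sqrt (real m))"
proof (cases "m = 0")
  case True
  then show ?thesis using u by (simp add: Qf0_zero)
next
  case False
  then have m1: "1 \<le> m" by simp
  let ?K0 = "(c0 + 1) / c0"
  let ?p = "pstep V w m u y"
  have K0: "0 \<le> ?K0" using c0 by simp
  have "(\<Sum>j<K. Qf V w y m j u * (1 / sqrt (real j + 1)))
     \<le> (\<Sum>j<K. Qf V w y m j u * ((1/2)^j / \<gamma>^m + B / sqrt (real m)))"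
    by (intro sum_mono mult_left_mono fb m1 Qf_nn)
  also have "\<dots> = (1 / \<gamma>^m) * (\<Sum>j<K. Qf V w y m j u * (1/2)^j)
                 + B / sqrt (real m) * (\<Sum>j<K. Qf V w y m j u * 1^j)"
    by (simp add: sum.distrib sum_distrib_left algebra_simps)
  also have "\<dots> \<le> (1 / \<gamma>^m) * ((c1 / (c1 + 1 - 1/2))^m * ?K0 * ?p)
                 + B / sqrt (real m) * ((c1 / (c1 + 1 - 1))^m * ?K0 * ?p)"
    using g by (intro add_mono mult_left_mono S_bound u) auto
  also have "(c1 / (c1 + 1 - 1/2))^m = (\<gamma>^m)^2"
  proof -
    have "(\<gamma>^m)^2 = (\<gamma>^2)^m" by (metis power_mult mult.commute)
    then show ?thesis using g(2) by (simp add: add.commute)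
  qed
  also have "(c1 / (c1 + 1 - 1))^m = 1" using c0 c01 by simp
  also have "(1 / \<gamma>^m) * ((\<gamma>^m)^2 * ?K0 * ?p) + B / sqrt (real m) * (1 * ?K0 * ?p)
      = ?K0 * ?p * (\<gamma>^m + B / sqrt (real m))"
    by (rule aux3) (use g in simp)
  also have "\<dots> \<le> ?K0 * ?p * (C1 / sqrt (real m) + B / sqrt (real m))"
    by (intro mult_left_mono add_mono gb m1 mult_nonneg_nonneg K0 pstep_nn) auto
  also have "\<dots> = ?K0 * (C1 + B) * (?p / sqrt (real m))"
    by (simp add: field_simps add_divide_distrib)
  finally show ?thesis .
qed

lemma comb:
  assumes u: "u \<in> V" "u \<noteq> y"
    and g: "0 < \<gamma>" "\<gamma>^2 = c1 / (c1 + 1/2)" "0 \<le> B"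
    and fb: "\<And>k j. 1 \<le> k \<Longrightarrow> 1 / sqrt (real j + 1) \<le> (1/2)^j / \<gamma>^k + B / sqrt (real k)"
    and gb: "\<And>k. 1 \<le> k \<Longrightarrow> \<gamma>^k \<le> C1 / sqrt (real k)"
  shows "(\<Sum>n<K. Wt V w y zt n u z0)
     \<le> (c0 + 1) / c0 * (C1 + B) * (\<Sum>m<K. pstep V w m u y / sqrt (real m))"
proof -
  let ?g = "\<lambda>i m. Qf V w y m i u * (1 / sqrt (real i + 1))"
  have "(\<Sum>n<K. Wt V w y zt n u z0) \<le> (\<Sum>n<K. \<Sum>i\<le>n. ?g i (n - i))"
    unfolding Wt_def by (intro sum_mono mult_left_mono sw_bound Qf_nn)
  also have "\<dots> = (\<Sum>(i, m)\<in>{(i, m). i + m < K}. ?g i m)"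
    by (rule sum.triangle_reindex[symmetric])
  also have "\<dots> \<le> (\<Sum>(i, m)\<in>{..<K} \<times> {..<K}. ?g i m)"
    by (rule sum_mono2) (auto intro!: mult_nonneg_nonneg divide_nonneg_nonneg Qf_nn)
  also have "\<dots> = (\<Sum>i<K. \<Sum>m<K. ?g i m)" by (rule sum.cartesian_product[symmetric])
  also have "\<dots> = (\<Sum>m<K. \<Sum>i<K. ?g i m)" by (rule sum.swap)
  also have "\<dots> \<le> (\<Sum>m<K. (c0 + 1) / c0 * (C1 + B) * (pstep V w m u y / sqrt (real m)))"
    by (intro sum_mono per_m[OF u g] fb gb) auto
  also have "\<dots> = (c0 + 1) / c0 * (C1 + B) * (\<Sum>m<K. pstep V w m u y / sqrt (real m))"
    by (simp add: sum_distrib_left)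
  finally show ?thesis .
qed

end


lemma supz_upper: "bdd_above S \<Longrightarrow> x \<in> S \<Longrightarrow> x \<le> supz S"
  unfolding supz_def by (auto intro: cSup_upper)

lemma supz_least: "(\<And>x. x \<in> S \<Longrightarrow> x \<le> b) \<Longrightarrow> 0 \<le> b \<Longrightarrow> supz S \<le> b"
  unfolding supz_def by (auto intro: cSup_least)

lemma supz_nn: "bdd_above S \<Longrightarrow> (\<And>x. x \<in> S \<Longrightarrow> 0 \<le> x) \<Longrightarrow> 0 \<le> supz S"
  unfolding supz_def by (auto intro: order.trans[OF _ cSup_upper])

context fg begin

lemma hit_nn:
  assumes "u \<in> V"
  shows "0 \<le> hitp (cyl_V V) (cyl_w V w) A k (u, z0)"
  using assms
proof (induction k arbitrary: u z0)
  case 0 then show ?case by simp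
next
  case (Suc k)
  let ?h = "hitp (cyl_V V) (cyl_w V w) A k"
  show ?case
  proof (cases "(u, z0) \<in> A")
    case True then show ?thesis by simp
  next
    case False
    have "hitp (cyl_V V) (cyl_w V w) A (Suc k) (u, z0)
      = (\<Sum>u'\<in>V. w u u' / (wdeg V w u + 1) * ?h (u', z0)) + (?h (u, z0 + 1) + ?h (u, z0 - 1)) / (2 * (wdeg V w u + 1))"
      using False cyl_step[OF Suc.prems, of z0 ?h] by (simp del: hitp.simps add: hitp.simps(2))
    also have "0 \<le> \<dots>"
      using Suc.IH Suc.prems
      by (intro add_nonneg_nonneg sum_nonneg mult_nonneg_nonneg divide_nonneg_nonneg)
         (auto intro!: w_nn add_nonneg_nonneg deg_nn)
    finally show ?thesis .
  qed
qed

lemma pset_finite: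
  assumes "I \<subseteq> V" "Y \<subseteq> V"
  shows "finite {pstep V w n y0 yy | y0 yy. y0 \<in> I \<and> yy \<in> Y}"
proof (rule finite_subset)
  show "{pstep V w n y0 yy | y0 yy. y0 \<in> I \<and> yy \<in> Y} \<subseteq> (\<lambda>(a, b). pstep V w n a b) ` (V \<times> V)"
    using assms by auto
  show "finite ((\<lambda>(a, b). pstep V w n a b) ` (V \<times> V))" using fin by simp
qed

lemma sup_bound:
  assumes ys: "ys \<in> V" "ys \<in> Y" "Y \<subseteq> V" and I: "I \<subseteq> V" "ys \<notin> I"
    and g: "0 < \<gamma>" "\<gamma>^2 = c1 / (c1 + 1/2)" "0 \<le> B"
    and fb: "\<And>k j. 1 \<le> k \<Longrightarrow> 1 / sqrt (real j + 1) \<le> (1/2)^j / \<gamma>^k + B / sqrt (real k)"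
    and gb: "\<And>k. 1 \<le> k \<Longrightarrow> \<gamma>^k \<le> C1 / sqrt (real k)"
  shows "0 \<le> supz {hit_before (cyl_V V) (cyl_w V w) {(ys, zt)} T (y0, z0) | y0 z0. y0 \<in> I}
    \<and> supz {hit_before (cyl_V V) (cyl_w V w) {(ys, zt)} T (y0, z0) | y0 z0. y0 \<in> I}
      \<le> (c0 + 1) / c0 * (C1 + B) * (\<Sum>n = 1..nat \<lfloor>T\<rfloor>. supz {pstep V w n y0 yy | y0 yy. y0 \<in> I \<and> yy \<in> Y} / sqrt (real n))"
proof -
  let ?P = "\<lambda>n. supz {pstep V w n y0 yy | y0 yy. y0 \<in> I \<and> yy \<in> Y}"
  let ?A = "\<Sum>n = 1..nat \<lfloor>T\<rfloor>. ?P n / sqrt (real n)"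
  let ?Kc = "(c0 + 1) / c0 * (C1 + B)"
  let ?S = "{hit_before (cyl_V V) (cyl_w V w) {(ys, zt)} T (y0, z0) | y0 z0. y0 \<in> I}"
  have Pnn: "0 \<le> ?P n" for n
    by (rule supz_nn) (auto intro: bdd_above_finite pset_finite[OF I(1) ys(3)] pstep_nn)
  have Ann: "0 \<le> ?A" by (intro sum_nonneg divide_nonneg_nonneg Pnn) auto
  have C1nn: "0 \<le> C1" using gb[of 1] g by (auto simp: order.trans[OF less_imp_le])
  have Kcnn: "0 \<le> ?Kc" using c0 C1nn g by simp
  have elem: "hit_before (cyl_V V) (cyl_w V w) {(ys, zt)} T (y0, z0) \<le> ?Kc * ?A" if y0: "y0 \<in> I" for y0 z0
  proof -
    let ?K = "nat \<lceil>T\<rceil>"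
    have u: "y0 \<in> V" "y0 \<noteq> ys" using y0 I by auto
    have "hit_before (cyl_V V) (cyl_w V w) {(ys, zt)} T (y0, z0) \<le> (\<Sum>n<?K. Wt V w ys zt n y0 z0)"
      unfolding hit_before_def by (rule hit_bound[OF u(1)])
    also have "\<dots> \<le> ?Kc * (\<Sum>m<?K. pstep V w m y0 ys / sqrt (real m))"
      by (rule comb[OF u g fb gb])
    finally have h1: "hit_before (cyl_V V) (cyl_w V w) {(ys, zt)} T (y0, z0) \<le> ?Kc * (\<Sum>m<?K. pstep V w m y0 ys / sqrt (real m))" .
    have "(\<Sum>m<?K. pstep V w m y0 ys / sqrt (real m)) \<le> (\<Sum>m\<in>insert 0 {1..nat \<lfloor>T\<rfloor>}. pstep V w m y0 ys / sqrt (real m))"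
    proof (rule sum_mono2)
      show "{..<?K} \<subseteq> insert 0 {1..nat \<lfloor>T\<rfloor>}"
      proof
        fix m assume "m \<in> {..<?K}"
        then have "int m < \<lceil>T\<rceil>" by auto
        moreover have "\<lceil>T\<rceil> - \<lfloor>T\<rfloor> \<le> 1" by (rule ceiling_diff_floor_le_1)
        ultimately have "int m \<le> \<lfloor>T\<rfloor>" by linarith
        then show "m \<in> insert 0 {1..nat \<lfloor>T\<rfloor>}" by auto
      qed
    qed (auto intro!: divide_nonneg_nonneg pstep_nn)
    also have "\<dots> = (\<Sum>m = 1..nat \<lfloor>T\<rfloor>. pstep V w m y0 ys / sqrt (real m))"
      by (subst sum.insert) auto
    also have "\<dots> \<le> ?A"
    proof (intro sum_mono divide_right_mono)
      fix m
      show "pstep V w m y0 ys \<le> ?P m"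
        by (rule supz_upper) (use y0 ys in \<open>auto intro: bdd_above_finite pset_finite[OF I(1) ys(3)]\<close>)
    qed auto
    finally have h2: "(\<Sum>m<?K. pstep V w m y0 ys / sqrt (real m)) \<le> ?A" .
    show ?thesis using h1 mult_left_mono[OF h2 Kcnn] by linarith
  qed
  show ?thesis
  proof
    show "0 \<le> supz ?S"
    proof (rule supz_nn)
      show "bdd_above ?S" by (rule bdd_aboveI[where M="?Kc * ?A"]) (use elem in blast)
      show "0 \<le> x" if "x \<in> ?S" for x
        using that I(1) unfolding hit_before_def by (auto intro!: hit_nn)
    qed
    show "supz ?S \<le> ?Kc * ?A"
    proof (rule supz_least)
      show "x \<le> ?Kc * ?A" if "x \<in> ?S" for x using that elem by blast
      show "0 \<le> ?Kc * ?A" using Kcnn Ann by (rule mult_nonneg_nonneg)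
    qed
  qed
qed

end


lemma gdist_le: "(a, b) \<in> (edges w) ^^ n \<Longrightarrow> gdist w a b \<le> n"
  unfolding gdist_def by (rule Least_le)

lemma gdist_path: "(a, b) \<in> (edges w) ^^ n \<Longrightarrow> (a, b) \<in> (edges w) ^^ (gdist w a b)"
  unfolding gdist_def by (rule LeastI)

lemma pullback:
  assumes iso: "wiso w wG \<phi> (gball V w y r) (gball VG wG ob r)" and phy: "\<phi> y = ob"
    and y: "y \<in> V" and ob: "ob \<in> VG" and r: "0 \<le> r"
    and supp: "\<And>a b. wG a b \<noteq> 0 \<Longrightarrow> a \<in> VG \<and> b \<in> VG"
  shows "(ob, g) \<in> (edges wG) ^^ n \<Longrightarrow> real n \<le> r \<Longrightarrow>
     g \<in> gball VG wG ob r \<and> (y, inv_into (gball V w y r) \<phi> g) \<in> (edges w) ^^ n"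
proof (induction n arbitrary: g)
  let ?Bl = "gball V w y r" and ?BG = "gball VG wG ob r"
  have bij: "bij_betw \<phi> ?Bl ?BG" and wp: "\<And>a b. a \<in> ?Bl \<Longrightarrow> b \<in> ?Bl \<Longrightarrow> wG (\<phi> a) (\<phi> b) = w a b"
    using iso unfolding wiso_def by auto
  have img: "\<phi> ` ?Bl = ?BG" using bij by (rule bij_betw_imp_surj_on)
  have inj: "inj_on \<phi> ?Bl" using bij by (rule bij_betw_imp_inj_on)
  case 0
  have yB: "y \<in> ?Bl" using y r gdist_le[where a=y and b=y and w=w and n=0] unfolding gball_def by auto
  have g: "g = ob" using 0 by simp
  have obB: "ob \<in> ?BG" using ob r gdist_le[where a=ob and b=ob and w=wG and n=0] unfolding gball_def by auto
  have "inv_into ?Bl \<phi> ob = y" using inv_into_f_f[OF inj yB] phy by simp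
  then show ?case using g obB by simp
next
  let ?Bl = "gball V w y r" and ?BG = "gball VG wG ob r"
  have bij: "bij_betw \<phi> ?Bl ?BG" and wp: "\<And>a b. a \<in> ?Bl \<Longrightarrow> b \<in> ?Bl \<Longrightarrow> wG (\<phi> a) (\<phi> b) = w a b"
    using iso unfolding wiso_def by auto
  have img: "\<phi> ` ?Bl = ?BG" using bij by (rule bij_betw_imp_surj_on)
  case (Suc n)
  from Suc.prems(1) obtain c where c1: "(ob, c) \<in> (edges wG) ^^ n" and c2: "(c, g) \<in> edges wG"
    by (rule relpow_Suc_E)
  have IH: "c \<in> ?BG" "(y, inv_into ?Bl \<phi> c) \<in> (edges w) ^^ n"
    using Suc.IH[OF c1] Suc.prems(2) by auto
  have wcg: "wG c g > 0" using c2 unfolding edges_def by simp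
  then have gV: "g \<in> VG" using supp[of c g] by auto
  have "gdist wG ob g \<le> Suc n" using Suc.prems(1) by (rule gdist_le)
  then have gB: "g \<in> ?BG" using gV Suc.prems(2) unfolding gball_def by auto
  have ic: "inv_into ?Bl \<phi> c \<in> ?Bl" using IH(1) img by (metis inv_into_into)
  have ig: "inv_into ?Bl \<phi> g \<in> ?Bl" using gB img by (metis inv_into_into)
  have fc: "\<phi> (inv_into ?Bl \<phi> c) = c" using IH(1) img by (metis f_inv_into_f)
  have fg: "\<phi> (inv_into ?Bl \<phi> g) = g" using gB img by (metis f_inv_into_f)
  have "w (inv_into ?Bl \<phi> c) (inv_into ?Bl \<phi> g) = wG c g"
    using wp[OF ic ig] fc fg by simp
  then have "(inv_into ?Bl \<phi> c, inv_into ?Bl \<phi> g) \<in> edges w" using wcg unfolding edges_def by simp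
  then show ?case using gB IH(2) by (auto intro: relpow_Suc_I)
qed

theorem lemma7p2:
  fixes M :: nat and V :: "nat \<Rightarrow> 'v set" and w :: "nat \<Rightarrow> 'v \<Rightarrow> 'v \<Rightarrow> real"
    and y :: "nat \<Rightarrow> nat \<Rightarrow> 'v" and z :: "nat \<Rightarrow> nat \<Rightarrow> int"
    and \<epsilon> c0 c1 :: real and v :: "nat \<Rightarrow> real" and r :: "nat \<Rightarrow> real"
    and VG :: "nat \<Rightarrow> 'g set" and wG :: "nat \<Rightarrow> 'g \<Rightarrow> 'g \<Rightarrow> real" and ob :: "nat \<Rightarrow> 'g"
    and \<phi> :: "nat \<Rightarrow> nat \<Rightarrow> 'v \<Rightarrow> 'g" and C :: "nat \<Rightarrow> nat \<Rightarrow> 'v set"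
    and VH :: "nat \<Rightarrow> 'h set" and wH :: "nat \<Rightarrow> 'h \<Rightarrow> 'h \<Rightarrow> real"
    and \<psi> :: "nat \<Rightarrow> nat \<Rightarrow> 'v \<Rightarrow> 'h"
  defines "lam \<equiv> \<lambda>N. spectral_gap (V N) (w N)"
  defines "T \<equiv> \<lambda>N. (1 / lam N) * real (card (V N)) powr \<epsilon>"
  assumes graphs: "\<And>N. finite (V N) \<and> wgraph (V N) (w N)"
    and M1: "1 \<le> M"
    and eps: "0 < \<epsilon>" "\<epsilon> < 1"
    and pts: "\<And>m N. m < M \<Longrightarrow> y m N \<in> V N"
    and A1: "0 < c0" "c0 \<le> c1" "\<And>N x. x \<in> V N \<Longrightarrow> c0 \<le> wdeg (V N) (w N) x \<and> wdeg (V N) (w N) x \<le> c1"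
    and A2: "\<And>N. 1 / lam N \<le> real (card (V N)) powr (2 - \<epsilon>)"
    and A3: "\<And>m m'. m < M \<Longrightarrow> m' < M \<Longrightarrow> m \<noteq> m' \<Longrightarrow>
       filterlim (\<lambda>N. real (gdist (cyl_w (V N) (w N)) (y m N, z m N) (y m' N, z m' N))) at_top sequentially"
    and A4: "\<And>m. m < M \<Longrightarrow> (\<lambda>N. real_of_int (z m N) / real (card (V N))) \<longlonglongrightarrow> v m"
    and A5r: "filterlim r at_top sequentially"
    and A5: "\<And>m. m < M \<Longrightarrow> wgraph (VG m) (wG m) \<and> infinite (VG m) \<and> ob m \<in> VG m \<and>
       (\<forall>N. wiso (w N) (wG m) (\<phi> m N) (gball (V N) (w N) (y m N) (r N)) (gball (VG m) (wG m) (ob m) (r N))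
            \<and> \<phi> m N (y m N) = ob m)"
    and A6: "\<And>m N. m < M \<Longrightarrow> gball (V N) (w N) (y m N) (r N) \<subseteq> C m N \<and> C m N \<subseteq> V N"
    and A7: "\<And>m. m < M \<Longrightarrow> wgraph (VH m) (wH m) \<and> infinite (VH m) \<and>
       (\<forall>N. \<psi> m N ` C m N \<subseteq> VH m
         \<and> wiso (w N) (wH m) (\<psi> m N) (gcl (V N) (w N) (C m N)) (gcl (VH m) (wH m) (\<psi> m N ` C m N))
         \<and> \<psi> m N ` obd (V N) (w N) (C m N) = obd (VH m) (wH m) (\<psi> m N ` C m N))"
    and A8: "\<And>m m' N. m < M \<Longrightarrow> m' < M \<Longrightarrow> v m = v m' \<Longrightarrow> C m N = C m' N \<or> C m N \<inter> C m' N = {}"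
    and A9: "\<And>m \<rho>0. m < M \<Longrightarrow> 0 < \<rho>0 \<Longrightarrow>
       (\<lambda>n. real n powr (1/2 + \<epsilon>) * supz {pstep (VH m) (wH m) n y0 yy | N y0 yy.
            y0 \<in> VH m \<and> yy \<in> gball (VH m) (wH m) (\<psi> m N (y m N)) \<rho>0}) \<longlonglongrightarrow> 0"
    and hyp: "\<And>m \<rho>0. m < M \<Longrightarrow> 0 < \<rho>0 \<Longrightarrow>
       (\<lambda>N. \<Sum>n = 1..nat \<lfloor>T N\<rfloor>. supz {pstep (V N) (w N) n y0 yy | y0 yy.
            y0 \<in> ibd (V N) (w N) (C m N) \<and> yy \<in> gball (V N) (w N) (y m N) \<rho>0} / sqrt (real n))
         \<longlonglongrightarrow> 0"
  shows "\<forall>m < M. \<forall>gy \<in> VG m. \<forall>zz :: int.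
    (\<lambda>N. supz {hit_before (cyl_V (V N)) (cyl_w (V N) (w N))
                 {(inv_into (gball (V N) (w N) (y m N) (r N)) (\<phi> m N) gy, z m N + zz)} (T N) (y0, z0)
               | y0 z0. y0 \<in> ibd (V N) (w N) (C m N)}) \<longlonglongrightarrow> 0"
proof (intro allI impI ballI)
  fix m gy zz
  assume m: "m < M" and gy: "gy \<in> VG m"
  have c1p: "0 < c1" using A1(1,2) by linarith
  obtain \<gamma> B C1 where g: "0 < \<gamma>" "\<gamma>^2 = c1 / (c1 + 1/2)" "0 \<le> B"
    and fb: "\<And>k j. 1 \<le> k \<Longrightarrow> 1 / sqrt (real j + 1) \<le> (1/2)^j / \<gamma>^k + B / sqrt (real k)"
    and gb: "\<And>k. 1 \<le> k \<Longrightarrow> \<gamma>^k \<le> C1 / sqrt (real k)"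
    using consts_exist[OF c1p] by blast
  have fgN: "fg (V N) (w N) c0 c1" for N using graphs[of N] A1 unfolding fg_def by auto
  have A5m: "wgraph (VG m) (wG m)" "ob m \<in> VG m"
    "\<And>N. wiso (w N) (wG m) (\<phi> m N) (gball (V N) (w N) (y m N) (r N)) (gball (VG m) (wG m) (ob m) (r N))"
    "\<And>N. \<phi> m N (y m N) = ob m" using A5[OF m] by auto
  have suppG: "\<And>a b. wG m a b \<noteq> 0 \<Longrightarrow> a \<in> VG m \<and> b \<in> VG m" using A5m(1) unfolding wgraph_def by auto
  have "(ob m, gy) \<in> (edges (wG m))\<^sup>*" using A5m(1,2) gy unfolding wgraph_def by auto
  then obtain n0 where n0: "(ob m, gy) \<in> (edges (wG m)) ^^ n0" using rtrancl_power by blast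
  define d0 where "d0 = gdist (wG m) (ob m) gy"
  have pd0: "(ob m, gy) \<in> (edges (wG m)) ^^ d0" unfolding d0_def by (rule gdist_path[OF n0])
  define \<rho>0 where "\<rho>0 = real d0 + 1"
  have \<rho>pos: "0 < \<rho>0" unfolding \<rho>0_def by simp
  define a where "a = (\<lambda>N. \<Sum>n = 1..nat \<lfloor>T N\<rfloor>. supz {pstep (V N) (w N) n y0 yy | y0 yy.
            y0 \<in> ibd (V N) (w N) (C m N) \<and> yy \<in> gball (V N) (w N) (y m N) \<rho>0} / sqrt (real n))"
  have a0: "a \<longlonglongrightarrow> 0" unfolding a_def by (rule hyp[OF m \<rho>pos])
  define Kc where "Kc = (c0 + 1) / c0 * (C1 + B)"
  have ev: "eventually (\<lambda>N. real d0 + 1 \<le> r N) sequentially" using A5r by (simp add: filterlim_at_top)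
  have main: "0 \<le> supz {hit_before (cyl_V (V N)) (cyl_w (V N) (w N))
                 {(inv_into (gball (V N) (w N) (y m N) (r N)) (\<phi> m N) gy, z m N + zz)} (T N) (y0, z0)
               | y0 z0. y0 \<in> ibd (V N) (w N) (C m N)}
     \<and> supz {hit_before (cyl_V (V N)) (cyl_w (V N) (w N))
                 {(inv_into (gball (V N) (w N) (y m N) (r N)) (\<phi> m N) gy, z m N + zz)} (T N) (y0, z0)
               | y0 z0. y0 \<in> ibd (V N) (w N) (C m N)} \<le> Kc * a N"
    if rN: "real d0 + 1 \<le> r N" for N
  proof -
    let ?Bl = "gball (V N) (w N) (y m N) (r N)"
    let ?ys = "inv_into ?Bl (\<phi> m N) gy"
    have ym: "y m N \<in> V N" using pts m by simp
    have r0: "0 \<le> r N" using rN by simp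
    have pb: "gy \<in> gball (VG m) (wG m) (ob m) (r N) \<and> (y m N, ?ys) \<in> (edges (w N)) ^^ d0"
      using pullback[OF A5m(3) A5m(4) ym A5m(2) r0 suppG pd0] rN by simp
    have img: "\<phi> m N ` ?Bl = gball (VG m) (wG m) (ob m) (r N)"
      using A5m(3)[of N] unfolding wiso_def by (auto dest: bij_betw_imp_surj_on)
    have ysB: "?ys \<in> ?Bl" using pb img by (metis inv_into_into)
    have ysV: "?ys \<in> V N" using ysB unfolding gball_def by auto
    have dys: "gdist (w N) (y m N) ?ys \<le> d0" using pb by (intro gdist_le) simp
    have ysY: "?ys \<in> gball (V N) (w N) (y m N) \<rho>0" using ysV dys unfolding gball_def \<rho>0_def by auto
    have YV: "gball (V N) (w N) (y m N) \<rho>0 \<subseteq> V N" unfolding gball_def by auto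
    have IV: "ibd (V N) (w N) (C m N) \<subseteq> V N" using A6[OF m, of N] unfolding ibd_def by auto
    have ysI: "?ys \<notin> ibd (V N) (w N) (C m N)"
    proof
      assume "?ys \<in> ibd (V N) (w N) (C m N)"
      then obtain y' where y': "y' \<in> V N - C m N" "w N ?ys y' > 0" unfolding ibd_def by auto
      have "(?ys, y') \<in> edges (w N)" using y' unfolding edges_def by simp
      then have "(y m N, y') \<in> (edges (w N)) ^^ Suc d0" using pb by (auto intro: relpow_Suc_I)
      then have "gdist (w N) (y m N) y' \<le> Suc d0" by (rule gdist_le)
      then have "y' \<in> ?Bl" using y' rN unfolding gball_def by auto
      then show False using A6[OF m, of N] y' by auto
    qed
    show ?thesis
      using fg.sup_bound[OF fgN ysV ysY YV IV ysI g fb gb, of "z m N + zz" "T N"]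
      unfolding a_def Kc_def by simp
  qed
  show "(\<lambda>N. supz {hit_before (cyl_V (V N)) (cyl_w (V N) (w N))
                 {(inv_into (gball (V N) (w N) (y m N) (r N)) (\<phi> m N) gy, z m N + zz)} (T N) (y0, z0)
               | y0 z0. y0 \<in> ibd (V N) (w N) (C m N)}) \<longlonglongrightarrow> 0"
  proof (rule tendsto_sandwich[of "\<lambda>_. 0" _ _ "\<lambda>N. Kc * a N"])
    show "eventually (\<lambda>N. (0::real) \<le> supz {hit_before (cyl_V (V N)) (cyl_w (V N) (w N))
                 {(inv_into (gball (V N) (w N) (y m N) (r N)) (\<phi> m N) gy, z m N + zz)} (T N) (y0, z0)
               | y0 z0. y0 \<in> ibd (V N) (w N) (C m N)}) sequentially"
      using ev by eventually_elim (use main in blast)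
    show "eventually (\<lambda>N. supz {hit_before (cyl_V (V N)) (cyl_w (V N) (w N))
                 {(inv_into (gball (V N) (w N) (y m N) (r N)) (\<phi> m N) gy, z m N + zz)} (T N) (y0, z0)
               | y0 z0. y0 \<in> ibd (V N) (w N) (C m N)} \<le> Kc * a N) sequentially"
      using ev by eventually_elim (use main in blast)
    show "(\<lambda>_. 0::real) \<longlonglongrightarrow> 0" by simp
    have "(\<lambda>N. Kc * a N) \<longlonglongrightarrow> Kc * 0" by (intro tendsto_intros a0)
    then show "(\<lambda>N. Kc * a N) \<longlonglongrightarrow> 0" by simp
  qed
qed



end
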